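(* Let $0<r<\min\{\frac{d\alpha_{\min}}{2d+1},\frac{\beta_{\min}}2,e^{-4}\}$ and $J=\lfloor\frac14\log(1/r)\rfloor$. Then for every $k_0\in\mathbb Z$, the sets $g_{k_0}\widetilde\Delta'_r,\ g_{k_0+1}\widetilde\Delta'_r,\dots,g_{k_0+J}\widetilde\Delta'_r$ are pairwise disjoint.
   Context: $d=m+n$; weight vectors $\boldsymbol\alpha\in(\mathbb R_{>0})^m$, $\boldsymbol\beta\in(\mathbb R_{>0})^n$ with coordinates summing to 1; $\alpha_{\min}=\min_i\alpha_i$, $\beta_{\min}=\min_j\beta_j$. $g_s=\mathrm{diag}(e^{\alpha_1s},\dots,e^{\alpha_ms},e^{-\beta_1s},\dots,e^{-\beta_ns})$ acting on the space $X_d$ of unimodular lattices in $\mathbb R^d$. $\Delta(\Lambda)=\sup_{\mathbf v\in\Lambda\setminus\{0\}}\log(1/\|\mathbf v\|)$ (sup norm); $\mathcal H(\mathcal A)=\{\Lambda:(\Lambda\setminus\{0\})\cap\mathcal A\ne\emptyset\}$; $R_r=(1-\tfrac r{2d},1+\tfrac r{2d})\times(-\sqrt r,\sqrt r)^{d-1}$; $\Delta'_r=\Delta^{-1}[0,r]\cap\mathcal H(R_r)$; $\widetilde\Delta'_r=\bigcup_{0\le s<1/2}g_{-s}\Delta'_r$. *)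

theory Defs
  imports Complex_Main "Jordan_Normal_Form.Determinant"
begin

text \<open>Vectors in R^d are Jordan_Normal_Form vectors of dimension d (indices 0..d-1);
  indices 0..m-1 are the expanding coordinates, m..m+n-1 the contracting ones.\<close>

definition unimodular_lattices :: "nat \<Rightarrow> real vec set set" where
  "unimodular_lattices d =
     {L. \<exists>B \<in> carrier_mat d d. \<bar>det B\<bar> = 1 \<and>
          L = {B *\<^sub>v map_vec real_of_int z | z. z \<in> carrier_vec d}}"

definition gvec :: "nat \<Rightarrow> (nat \<Rightarrow> real) \<Rightarrow> (nat \<Rightarrow> real) \<Rightarrow> real \<Rightarrow> real vec \<Rightarrow> real vec" where
  "gvec m \<alpha> \<beta> s v = vec (dim_vec v)
     (\<lambda>i. if i < m then exp (\<alpha> i * s) * v $ i else exp (- (\<beta> (i - m) * s)) * v $ i)"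

definition glat :: "nat \<Rightarrow> (nat \<Rightarrow> real) \<Rightarrow> (nat \<Rightarrow> real) \<Rightarrow> real \<Rightarrow> real vec set \<Rightarrow> real vec set" where
  "glat m \<alpha> \<beta> s L = gvec m \<alpha> \<beta> s ` L"

definition supnorm :: "real vec \<Rightarrow> real" where
  "supnorm v = Max ((\<lambda>i. \<bar>v $ i\<bar>) ` {..<dim_vec v})"

definition Delta :: "real vec set \<Rightarrow> real" where
  "Delta L = (SUP v \<in> {v \<in> L. v \<noteq> 0\<^sub>v (dim_vec v)}. ln (1 / supnorm v))"

definition hits :: "real vec set \<Rightarrow> real vec set set" where
  "hits A = {L. \<exists>v \<in> L. v \<noteq> 0\<^sub>v (dim_vec v) \<and> v \<in> A}"

definition Rbox :: "nat \<Rightarrow> real \<Rightarrow> real vec set" where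
  "Rbox d r = {v \<in> carrier_vec d. 1 - r / (2 * d) < v $ 0 \<and> v $ 0 < 1 + r / (2 * d) \<and>
      (\<forall>i \<in> {1..<d}. - sqrt r < v $ i \<and> v $ i < sqrt r)}"

definition DeltaPrime :: "nat \<Rightarrow> real \<Rightarrow> real vec set set" where
  "DeltaPrime d r = {L \<in> unimodular_lattices d. 0 \<le> Delta L \<and> Delta L \<le> r} \<inter> hits (Rbox d r)"

definition DeltaTilde :: "nat \<Rightarrow> (nat \<Rightarrow> real) \<Rightarrow> (nat \<Rightarrow> real) \<Rightarrow> nat \<Rightarrow> real \<Rightarrow> real vec set set" where
  "DeltaTilde m \<alpha> \<beta> n r = (\<Union>s \<in> {0..<1/2}. glat m \<alpha> \<beta> (- s) ` DeltaPrime (m + n) r)"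

end

theory Submission
  imports Defs
begin

lemma supnorm_ge: "i < dim_vec v \<Longrightarrow> \<bar>v $ i\<bar> \<le> supnorm v"
  unfolding supnorm_def by (intro Max_ge) auto

lemma supnorm_lt: "dim_vec v > 0 \<Longrightarrow> (\<forall>i < dim_vec v. \<bar>v $ i\<bar> < c) \<Longrightarrow> supnorm v < c"
  unfolding supnorm_def by (subst Max_less_iff) auto

lemma lattice_discrete:
  assumes B: "B \<in> carrier_mat d d" and dB: "det B \<noteq> (0::real)"
  shows "\<exists>c>0. \<forall>z \<in> carrier_vec d. B *\<^sub>v map_vec real_of_int z \<noteq> 0\<^sub>v d \<longrightarrow>
            c \<le> supnorm (B *\<^sub>v map_vec real_of_int z)"
proof -
  from det_non_zero_imp_unit[OF B dB, unfolded Units_def, of "()"]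
  obtain A where A: "A \<in> carrier_mat d d" and AB: "A * B = 1\<^sub>m d"
    by (auto simp: ring_mat_def)
  define K where "K = (\<Sum>i<d. \<Sum>j<d. \<bar>A $$ (i,j)\<bar>)"
  have K0: "K \<ge> 0" unfolding K_def by (intro sum_nonneg) auto
  show ?thesis
  proof (intro exI[of _ "1/(K+1)"] conjI ballI impI)
    show "0 < 1/(K+1)" using K0 by simp
    fix z :: "int vec" assume z: "z \<in> carrier_vec d" and nz: "B *\<^sub>v map_vec real_of_int z \<noteq> 0\<^sub>v d"
    define v where "v = B *\<^sub>v map_vec real_of_int z"
    have dv: "dim_vec v = d" using B unfolding v_def by simp
    have zz: "A *\<^sub>v v = map_vec real_of_int z"
      unfolding v_def using A B z AB
      by (metis assoc_mult_mat_vec map_carrier_vec one_mult_mat_vec)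
    have "z \<noteq> 0\<^sub>v d"
    proof
      assume "z = 0\<^sub>v d"
      then have m0: "map_vec real_of_int z = 0\<^sub>v d" by (intro eq_vecI) auto
      have "B *\<^sub>v map_vec real_of_int z = B *\<^sub>v 0\<^sub>v d" by (simp only: m0)
      also have "\<dots> = 0\<^sub>v d" using B by auto
      finally show False using nz by simp
    qed
    then obtain i where i: "i < d" "z $ i \<noteq> 0"
      using z by (metis carrier_vecD eq_vecI index_zero_vec(1) index_zero_vec(2))
    have "1 \<le> \<bar>real_of_int (z $ i)\<bar>" using i by linarith
    also have "real_of_int (z $ i) = (A *\<^sub>v v) $ i" using zz i z by simp
    also have "\<dots> = (\<Sum>j<d. A $$ (i,j) * v $ j)"
      using A i dv by (simp add: scalar_prod_def lessThan_atLeast0)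
    also have "\<bar>\<dots>\<bar> \<le> (\<Sum>j<d. \<bar>A $$ (i,j)\<bar> * supnorm v)"
      by (rule order_trans[OF sum_abs], rule sum_mono)
        (auto simp: abs_mult intro!: mult_left_mono supnorm_ge simp: dv)
    also have "\<dots> = (\<Sum>j<d. \<bar>A $$ (i,j)\<bar>) * supnorm v" by (simp add: sum_distrib_right)
    also have "\<dots> \<le> K * supnorm v"
    proof (rule mult_right_mono)
      show "(\<Sum>j<d. \<bar>A $$ (i,j)\<bar>) \<le> K" unfolding K_def
        by (rule member_le_sum[of i _ "\<lambda>i. \<Sum>j<d. \<bar>A $$ (i,j)\<bar>"]) (auto simp: i sum_nonneg)
      show "0 \<le> supnorm v" using order_trans[OF abs_ge_zero supnorm_ge[of 0 v]] i dv by simp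
    qed
    finally have 1: "1 \<le> K * supnorm v" .
    have s0: "0 \<le> supnorm v" using order_trans[OF abs_ge_zero supnorm_ge[of 0 v]] i dv by simp
    have "1 \<le> (K+1) * supnorm v" using 1 s0 by (simp add: algebra_simps)
    then show "1/(K+1) \<le> supnorm v" using K0 by (simp add: field_simps)
  qed
qed

lemma dim_gvec[simp]: "dim_vec (gvec m \<alpha> \<beta> s v) = dim_vec v"
  unfolding gvec_def by simp

lemma gvec_gvec: "gvec m \<alpha> \<beta> a (gvec m \<alpha> \<beta> b v) = gvec m \<alpha> \<beta> (a + b) v"
proof (rule eq_vecI)
  fix i assume "i < dim_vec (gvec m \<alpha> \<beta> (a + b) v)"
  then have i: "i < dim_vec v" by (simp add: gvec_def)
  have e1: "exp (\<alpha> i * a) * (exp (\<alpha> i * b) * x) = exp (\<alpha> i * (a + b)) * x" for x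
    by (simp add: distrib_left exp_add)
  have e2: "exp (- (\<beta> (i - m) * a)) * (exp (- (\<beta> (i - m) * b)) * x) = exp (- (\<beta> (i - m) * (a + b))) * x" for x
    by (simp add: distrib_left exp_add exp_diff exp_minus field_simps)
  show "gvec m \<alpha> \<beta> a (gvec m \<alpha> \<beta> b v) $ i = gvec m \<alpha> \<beta> (a + b) v $ i"
    using i e1 e2 unfolding gvec_def by simp
qed (simp add: gvec_def)

lemma gvec_zero: "gvec m \<alpha> \<beta> 0 v = v"
  unfolding gvec_def by (intro eq_vecI) auto

lemma glat_glat: "glat m \<alpha> \<beta> a (glat m \<alpha> \<beta> b L) = glat m \<alpha> \<beta> (a + b) L"
  unfolding glat_def image_image gvec_gvec by simp

lemma Delta_ge:
  assumes L: "L \<in> unimodular_lattices d" and u: "u \<in> L" "u \<noteq> 0\<^sub>v (dim_vec u)"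
  shows "ln (1 / supnorm u) \<le> Delta L"
proof -
  from L obtain B where B: "B \<in> carrier_mat d d" "\<bar>det B\<bar> = 1"
    and LB: "L = {B *\<^sub>v map_vec real_of_int z | z. z \<in> carrier_vec d}"
    unfolding unimodular_lattices_def by auto
  have "det B \<noteq> 0" using B by auto
  from lattice_discrete[OF B(1) this] obtain c where c: "c > 0"
    and cz: "\<And>z. z \<in> carrier_vec d \<Longrightarrow> B *\<^sub>v map_vec real_of_int z \<noteq> 0\<^sub>v d \<Longrightarrow>
            c \<le> supnorm (B *\<^sub>v map_vec real_of_int z)" by blast
  have bd: "\<And>v. v \<in> L \<Longrightarrow> v \<noteq> 0\<^sub>v (dim_vec v) \<Longrightarrow> c \<le> supnorm v"
  proof -
    fix v assume "v \<in> L" "v \<noteq> 0\<^sub>v (dim_vec v)"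
    then obtain z where z: "z \<in> carrier_vec d" "v = B *\<^sub>v map_vec real_of_int z" using LB by auto
    then have "dim_vec v = d" using B by simp
    then show "c \<le> supnorm v" using cz z \<open>v \<noteq> 0\<^sub>v (dim_vec v)\<close> by auto
  qed
  have "bdd_above ((\<lambda>v. ln (1 / supnorm v)) ` {v \<in> L. v \<noteq> 0\<^sub>v (dim_vec v)})"
    unfolding bdd_above_def
  proof (intro exI[of _ "ln (1/c)"] ballI)
    fix x assume "x \<in> (\<lambda>v. ln (1 / supnorm v)) ` {v \<in> L. v \<noteq> 0\<^sub>v (dim_vec v)}"
    then obtain v where v: "v \<in> L" "v \<noteq> 0\<^sub>v (dim_vec v)" "x = ln (1 / supnorm v)" by auto
    have "c \<le> supnorm v" using bd v by auto
    then show "x \<le> ln (1/c)" using v c by (simp add: ln_div)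
  qed
  then show ?thesis unfolding Delta_def using u by (intro cSUP_upper) auto
qed

lemma core:
  fixes m n :: nat and \<alpha> \<beta> :: "nat \<Rightarrow> real" and r t1 t2 :: real
  assumes "m \<ge> 1" and "n \<ge> 1"
    and "\<forall>i < m. \<alpha> i > 0"
    and "\<forall>j < n. \<beta> j > 0" and "(\<Sum>j<n. \<beta> j) = 1"
    and "0 < r"
    and ra: "r < real (m + n) * Min (\<alpha> ` {..<m}) / (2 * real (m + n) + 1)"
    and re: "r < exp (- 4)"
    and L1: "L1 \<in> DeltaPrime (m + n) r" and L2: "L2 \<in> DeltaPrime (m + n) r"
    and eq: "gvec m \<alpha> \<beta> t1 ` L1 = gvec m \<alpha> \<beta> t2 ` L2"
    and t_lo: "1/2 < t2 - t1" and t_hi: "t2 - t1 \<le> ln (1 / r) / 4 + 1/2"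
  shows False
proof -
  define d where "d = m + n"
  define t where "t = t2 - t1"
  have d1: "real d \<ge> 1" using assms(1) unfolding d_def by simp
  from L1 obtain w where w: "w \<in> L1" "w \<in> Rbox d r"
    unfolding DeltaPrime_def hits_def d_def by auto
  have wc: "dim_vec w = d" using w unfolding Rbox_def by auto
  have w0: "1 - r / (2 * d) < w $ 0" "w $ 0 < 1 + r / (2 * d)"
    and wi: "\<And>i. i \<in> {1..<d} \<Longrightarrow> - sqrt r < w $ i \<and> w $ i < sqrt r"
    using w unfolding Rbox_def by auto
  have "gvec m \<alpha> \<beta> t1 w \<in> gvec m \<alpha> \<beta> t2 ` L2" using eq w by blast
  then obtain u where u: "u \<in> L2" "gvec m \<alpha> \<beta> t1 w = gvec m \<alpha> \<beta> t2 u" by auto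
  have "gvec m \<alpha> \<beta> (-t2) (gvec m \<alpha> \<beta> t1 w) = gvec m \<alpha> \<beta> (-t2) (gvec m \<alpha> \<beta> t2 u)"
    using u by simp
  then have uw: "u = gvec m \<alpha> \<beta> (- t) w" unfolding gvec_gvec t_def by (simp add: gvec_zero)
  have du: "dim_vec u = d" using uw wc by simp
  have e4: "exp (4::real) \<ge> 5" using exp_ge_add_one_self[of 4] by simp
  have "exp (-4::real) = 1 / exp 4" by (simp add: exp_minus field_simps)
  also have "\<dots> \<le> 1/5" using e4 by (simp add: field_simps)
  finally have "exp (-4::real) \<le> 1/5" .
  then have r1: "r < 1/2" using re by simp
  have rsmall: "r / (2 * d) < 1" using r1 d1 \<open>0 < r\<close> by (simp add: field_simps)
  have "ln r < ln (exp (-4))" using re \<open>0 < r\<close> by (subst ln_less_cancel_iff) auto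
  then have lnr: "ln r < -4" by simp
  have sr: "sqrt r < exp (-2)"
  proof -
    have "sqrt r < sqrt (exp (-4))" using re by simp
    also have "exp (-4::real) = (exp (-2))^2" by (simp add: power2_eq_square exp_add[symmetric] del: exp_add)
    also have "sqrt \<dots> = exp (-2)" by simp
    finally show ?thesis .
  qed
  have e2: "exp (-2) < exp (-r)" using r1 by simp
  have amin: "Min (\<alpha> ` {..<m}) \<le> \<alpha> 0" using assms(1) by (intro Min_le) auto
  have a0: "\<alpha> 0 > 2 * r + r / d"
  proof -
    have "r * (2 * d + 1) < d * Min (\<alpha> ` {..<m})" using ra d1 unfolding d_def by (simp add: field_simps)
    also have "\<dots> \<le> d * \<alpha> 0" using amin d1 by simp
    finally have "r * (2 * d + 1) < d * \<alpha> 0" .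
    then show ?thesis using d1 by (simp add: field_simps)
  qed
  have tpos: "t > 1/2" using t_lo t_def by simp
  have tle: "t + ln r / 2 < - r"
  proof -
    have "ln (1/r) = - ln r" using \<open>0 < r\<close> by (simp add: ln_div)
    then show ?thesis using t_hi lnr r1 \<open>0<r\<close> unfolding t_def by linarith
  qed
  have bound: "\<bar>u $ i\<bar> < exp (- r)" if i: "i < d" for i
  proof (cases "i = 0")
    case True
    then have ui: "u $ 0 = exp (\<alpha> 0 * (-t)) * w $ 0" using uw assms(1) i wc by (simp add: gvec_def)
    have wpos: "w $ 0 > 0" using w0 rsmall by simp
    have "exp (\<alpha> 0 * (-t)) \<le> exp (- \<alpha> 0 / 2)" using tpos assms(1,3) by simp
    also have "\<dots> < exp (- r - r / (2*d))" using a0 by simp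
    finally have A: "exp (\<alpha> 0 * (-t)) < exp (- r - r / (2*d))" .
    have B: "w $ 0 < exp (r / (2 * d))" using w0(2) by (smt (verit) exp_ge_add_one_self)
    have "exp (\<alpha> 0 * (-t)) * w $ 0 < exp (- r - r / (2*d)) * exp (r / (2 * d))"
      using A B wpos by (intro mult_strict_mono) auto
    also have "\<dots> = exp (- r)" by (simp add: exp_add[symmetric])
    finally show ?thesis using ui wpos True by simp
  next
    case False
    then have wi': "\<bar>w $ i\<bar> < sqrt r" using wi[of i] i by auto
    show ?thesis
    proof (cases "i < m")
      case True
      then have ui: "u $ i = exp (\<alpha> i * (-t)) * w $ i" using uw i wc by (simp add: gvec_def)
      have "exp (\<alpha> i * (-t)) \<le> 1" using True assms(3) tpos by (simp add: zero_le_mult_iff less_imp_le)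
      then have "\<bar>u $ i\<bar> \<le> \<bar>w $ i\<bar>" unfolding ui abs_mult by (simp add: mult_left_le_one_le)
      then show ?thesis using wi' sr e2 by linarith
    next
      case False
      then have ui: "u $ i = exp (\<beta> (i - m) * t) * w $ i" using uw i wc by (simp add: gvec_def)
      have j: "i - m < n" using i False unfolding d_def by simp
      have "\<beta> (i - m) \<le> (\<Sum>j<n. \<beta> j)"
        by (rule member_le_sum) (use assms(4) j in auto)
      then have b1: "\<beta> (i - m) \<le> 1" using assms(5) by simp
      have "exp (\<beta> (i - m) * t) \<le> exp t" using b1 tpos assms(4) j
        by (simp add: mult_left_le_one_le)
      have "\<bar>u $ i\<bar> \<le> exp t * sqrt r" unfolding ui abs_mult
        using \<open>exp (\<beta> (i - m) * t) \<le> exp t\<close> wi' by (intro mult_mono) auto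
      also have "sqrt r = exp (ln r / 2)" using \<open>0 < r\<close>
        by (subst ln_sqrt[symmetric]) auto
      also have "exp t * \<dots> = exp (t + ln r / 2)" by (simp add: exp_add)
      also have "\<dots> < exp (-r)" using tle by simp
      finally show ?thesis .
    qed
  qed
  have snu: "supnorm u < exp (- r)" using bound du d1 by (intro supnorm_lt) auto
  have u0: "u $ 0 \<noteq> 0"
  proof -
    have "u $ 0 = exp (\<alpha> 0 * (-t)) * w $ 0" using uw assms(1) wc d1 by (simp add: gvec_def)
    moreover have "w $ 0 > 0" using w0 rsmall by simp
    ultimately show ?thesis by simp
  qed
  have unz: "u \<noteq> 0\<^sub>v (dim_vec u)"
  proof
    assume "u = 0\<^sub>v (dim_vec u)"
    then have "u $ 0 = (0\<^sub>v (dim_vec u) :: real vec) $ 0" by simp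
    also have "\<dots> = 0" using du d1 by simp
    finally show False using u0 by simp
  qed
  have spos: "supnorm u > 0" using supnorm_ge[of 0 u] u0 du d1 by simp
  have L2u: "L2 \<in> unimodular_lattices d" and D2: "Delta L2 \<le> r" using L2 unfolding DeltaPrime_def d_def by auto
  have "ln (1 / supnorm u) \<le> Delta L2" by (rule Delta_ge[OF L2u u(1) unz])
  moreover have "ln (1 / supnorm u) > r"
  proof -
    have "ln (1 / supnorm u) = - ln (supnorm u)" using spos by (simp add: ln_div)
    moreover have "ln (supnorm u) < ln (exp (- r))" using snu spos by (subst ln_less_cancel_iff) auto
    ultimately show ?thesis by simp
  qed
  ultimately show False using D2 by simp
qed

theorem proposition4p4:
  fixes m n :: nat and \<alpha> \<beta> :: "nat \<Rightarrow> real" and r :: real and J :: int and k0 :: int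
  assumes "m \<ge> 1" and "n \<ge> 1"
    and "\<forall>i < m. \<alpha> i > 0" and "(\<Sum>i<m. \<alpha> i) = 1"
    and "\<forall>j < n. \<beta> j > 0" and "(\<Sum>j<n. \<beta> j) = 1"
    and "0 < r"
    and "r < real (m + n) * Min (\<alpha> ` {..<m}) / (2 * real (m + n) + 1)"
    and "r < Min (\<beta> ` {..<n}) / 2"
    and "r < exp (- 4)"
    and "J = \<lfloor>ln (1 / r) / 4\<rfloor>"
  shows "\<forall>k1 \<in> {k0..k0 + J}. \<forall>k2 \<in> {k0..k0 + J}. k1 \<noteq> k2 \<longrightarrow>
           glat m \<alpha> \<beta> (real_of_int k1) ` DeltaTilde m \<alpha> \<beta> n r \<inter>
           glat m \<alpha> \<beta> (real_of_int k2) ` DeltaTilde m \<alpha> \<beta> n r = {}"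
proof (intro ballI impI)
  fix k1 k2 assume k1: "k1 \<in> {k0..k0 + J}" and k2: "k2 \<in> {k0..k0 + J}" and kne: "k1 \<noteq> k2"
  have Jb: "real_of_int J \<le> ln (1 / r) / 4" using assms(11) of_int_floor_le by blast
  have rep: "\<exists>L s. L \<in> DeltaPrime (m + n) r \<and> 0 \<le> s \<and> s < 1/2 \<and>
      X = gvec m \<alpha> \<beta> (real_of_int k - s) ` L"
    if "X \<in> glat m \<alpha> \<beta> (real_of_int k) ` DeltaTilde m \<alpha> \<beta> n r" for X k
  proof -
    from that obtain Y where Y: "Y \<in> DeltaTilde m \<alpha> \<beta> n r" "X = glat m \<alpha> \<beta> (real_of_int k) Y" by auto
    from Y(1) obtain s L where s: "s \<in> {0..<1/2}" "L \<in> DeltaPrime (m + n) r" "Y = glat m \<alpha> \<beta> (- s) L"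
      unfolding DeltaTilde_def by auto
    have "X = glat m \<alpha> \<beta> (real_of_int k - s) L" using Y(2) s(3) glat_glat by simp
    then show ?thesis using s by (auto simp: glat_def)
  qed
  have key: False if H: "X \<in> glat m \<alpha> \<beta> (real_of_int a) ` DeltaTilde m \<alpha> \<beta> n r"
      "X \<in> glat m \<alpha> \<beta> (real_of_int b) ` DeltaTilde m \<alpha> \<beta> n r" "a < b"
      "a \<in> {k0..k0 + J}" "b \<in> {k0..k0 + J}" for X a b
  proof -
    obtain L1 s1 where A: "L1 \<in> DeltaPrime (m + n) r" "0 \<le> s1" "s1 < 1/2"
      "X = gvec m \<alpha> \<beta> (real_of_int a - s1) ` L1" using rep[OF H(1)] by blast
    obtain L2 s2 where B: "L2 \<in> DeltaPrime (m + n) r" "0 \<le> s2" "s2 < 1/2"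
      "X = gvec m \<alpha> \<beta> (real_of_int b - s2) ` L2" using rep[OF H(2)] by blast
    have ab1: "real_of_int b - real_of_int a \<ge> 1" using H(3) by linarith
    have ab2: "real_of_int b - real_of_int a \<le> real_of_int J" using H(4,5) by auto
    show False
    proof (rule core[OF assms(1,2,3,5,6,7,8,10) A(1) B(1)])
      show "gvec m \<alpha> \<beta> (real_of_int a - s1) ` L1 = gvec m \<alpha> \<beta> (real_of_int b - s2) ` L2"
        using A(4) B(4) by simp
      show "1/2 < real_of_int b - s2 - (real_of_int a - s1)" using ab1 A B by linarith
      show "real_of_int b - s2 - (real_of_int a - s1) \<le> ln (1 / r) / 4 + 1/2"
        using ab2 Jb A B by linarith
    qed
  qed
  show "glat m \<alpha> \<beta> (real_of_int k1) ` DeltaTilde m \<alpha> \<beta> n r \<inter>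
           glat m \<alpha> \<beta> (real_of_int k2) ` DeltaTilde m \<alpha> \<beta> n r = {}"
  proof (rule ccontr)
    assume "\<not> ?thesis"
    then obtain X where X1: "X \<in> glat m \<alpha> \<beta> (real_of_int k1) ` DeltaTilde m \<alpha> \<beta> n r"
      and X2: "X \<in> glat m \<alpha> \<beta> (real_of_int k2) ` DeltaTilde m \<alpha> \<beta> n r" by blast
    show False
    proof (cases "k1 < k2")
      case True
      show False by (rule key[OF X1 X2 True k1 k2])
    next
      case False
      then have "k2 < k1" using kne by simp
      show False by (rule key[OF X2 X1 \<open>k2 < k1\<close> k2 k1])
    qed
  qed
qed

end
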